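(* Let $p$ be an odd prime with $p\equiv 3\pmod 4$. Then for any odd Dirichlet characters $\chi_1,\chi_2$ modulo $p$ with $\chi_1\chi_2\neq\chi_0$, $$\sum_{a=0}^{p-1}\sum_{b=0}^{p-1}\sum_{c=0}^{p-1}\sum_{d=0}^{p-1}\overline{\chi_1}\,\overline{\chi_2}(a^5+b^5-c^5-d^5)\,\chi_1\chi_2(a+b-c-d)=0.$$
   Context: $\chi_0$ denotes the principal character modulo $p$. A character $\chi$ is odd if $\chi(-1)=-1$. Dirichlet characters modulo $p$ are extended by $\chi(x)=0$ when $p\mid x$, and $\overline{\chi}$ denotes the complex conjugate character; $\overline{\chi_1}\,\overline{\chi_2}(x)$ means $\overline{\chi_1}(x)\overline{\chi_2}(x)$. *)

theory Defs
  imports "HOL-Analysis.Analysis" "HOL-Number_Theory.Number_Theory"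
begin

definition dirichlet_char :: "int \<Rightarrow> (int \<Rightarrow> complex) \<Rightarrow> bool" where
  "dirichlet_char n chi \<longleftrightarrow>
     (\<forall>a b. chi (a * b) = chi a * chi b) \<and>
     (\<forall>a. chi (a + n) = chi a) \<and>
     (\<forall>a. chi a = 0 \<longleftrightarrow> \<not> coprime a n)"

definition principal_char :: "int \<Rightarrow> int \<Rightarrow> complex" where
  "principal_char n a = (if coprime a n then 1 else 0)"

definition odd_char :: "(int \<Rightarrow> complex) \<Rightarrow> bool" where
  "odd_char chi \<longleftrightarrow> chi (-1) = -1"

end

theory Submission
  imports Defs
begin

lemma dc_mult: "dirichlet_char n chi \<Longrightarrow> chi (a * b) = chi a * chi b"
  unfolding dirichlet_char_def by simp

lemma dc_per: "dirichlet_char n chi \<Longrightarrow> chi (a + n) = chi a"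
  unfolding dirichlet_char_def by simp

lemma dc_zero: "dirichlet_char n chi \<Longrightarrow> chi a = 0 \<longleftrightarrow> \<not> coprime a n"
  unfolding dirichlet_char_def by simp

lemma dc_shift:
  assumes "dirichlet_char n chi"
  shows "chi (a + int k * n) = chi a"
proof (induction k)
  case 0 then show ?case by simp
next
  case (Suc k)
  have "chi (a + int (Suc k) * n) = chi ((a + int k * n) + n)" by (simp add: algebra_simps)
  also have "\<dots> = chi (a + int k * n)" using assms unfolding dirichlet_char_def by blast
  finally show ?case using Suc by simp
qed

lemma dc_cong:
  assumes "dirichlet_char n chi" "[x = y] (mod n)"
  shows "chi x = chi y"
proof -
  obtain q where q: "y - x = n * q" using assms(2) by (metis cong_iff_dvd_diff cong_sym dvdE)
  show ?thesis
  proof (cases "q \<ge> 0")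
    case True
    have "y = x + int (nat q) * n" using q True by (simp add: algebra_simps)
    then show ?thesis using dc_shift[OF assms(1), of x "nat q"] by simp
  next
    case False
    have "x = y + int (nat (-q)) * n" using q False by (simp add: algebra_simps)
    then show ?thesis using dc_shift[OF assms(1), of y "nat (-q)"] by simp
  qed
qed

lemma dc_one:
  assumes "dirichlet_char n chi" shows "chi 1 = 1"
proof -
  have "chi 1 = chi 1 * chi 1" using assms unfolding dirichlet_char_def by (metis mult_1)
  moreover have "chi 1 \<noteq> 0" using assms unfolding dirichlet_char_def by simp
  ultimately show ?thesis by (metis mult_cancel_left1)
qed

lemma dc_pow:
  assumes "dirichlet_char n chi" shows "chi (x ^ k) = chi x ^ k"
  by (induction k) (use assms dc_one in \<open>auto simp: dirichlet_char_def\<close>)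

lemma fermat_int:
  fixes p t :: int
  assumes "prime p" "coprime t p"
  shows "[t ^ (nat p - 1) = 1] (mod p)"
proof -
  interpret residues p "residue_ring p"
    by unfold_locales (use assms prime_gt_1_int in auto)
  have "[t ^ totient (nat p) = 1] (mod p)" by (rule euler_theorem) fact
  moreover have "totient (nat p) = nat p - 1"
    by (rule totient_prime) (use assms in \<open>simp add: prime_nat_iff_prime\<close>)
  ultimately show ?thesis by simp
qed

lemma dc_root:
  assumes "dirichlet_char p chi" "prime p" "coprime t p"
  shows "chi t ^ (nat p - 1) = 1"
proof -
  have "chi t ^ (nat p - 1) = chi (t ^ (nat p - 1))" using dc_pow[OF assms(1)] by simp
  also have "\<dots> = chi 1" by (rule dc_cong[OF assms(1) fermat_int[OF assms(2,3)]])
  finally show ?thesis using dc_one[OF assms(1)] by simp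
qed

lemma dc_norm:
  assumes "dirichlet_char p chi" "prime p" "coprime t p"
  shows "cnj (chi t) * chi t = 1"
proof -
  have "nat p - 1 \<noteq> 0" using prime_gt_1_int[OF assms(2)] by arith
  moreover have "norm (chi t) = 1 \<or> nat p - 1 = 0" by (rule power_eq_1_iff[OF dc_root[OF assms]])
  ultimately have n1: "norm (chi t) = 1" by (elim disjE) simp_all
  have "cnj (chi t) * chi t = of_real ((norm (chi t))\<^sup>2)"
    by (simp only: complex_norm_square mult.commute)
  then show ?thesis using n1 by simp
qed

lemma reindex_mult:
  fixes p t :: int and g :: "int \<Rightarrow> complex"
  assumes "prime p" "coprime t p"
  shows "(\<Sum>x=0..p-1. g x) = (\<Sum>x=0..p-1. g (t * x mod p))"
proof -
  define t' where "t' = modular_inverse p t"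
  have p0: "p > 0" using prime_gt_1_int[OF assms(1)] by simp
  have i1: "[t * t' = 1] (mod p)" unfolding t'_def by (rule cong_modular_inverse1) fact
  have inv: "u * (v * m mod p) mod p = m" if "[v * u = 1] (mod p)" "m \<in> {0..p-1}" for u v m
  proof -
    have "[u * (v * m mod p) = u * (v * m)] (mod p)"
      by (intro cong_mult cong_refl) (auto simp: cong_def)
    also have "u * (v * m) = (v * u) * m" by (simp add: mult_ac)
    also have "[(v * u) * m = 1 * m] (mod p)"
      by (intro cong_mult cong_refl) (use that in auto)
    finally show ?thesis using that by (simp add: cong_def)
  qed
  have i2: "[t' * t = 1] (mod p)" using i1 by (simp add: mult.commute)
  have "bij_betw (\<lambda>x. t * x mod p) {0..p-1} {0..p-1}"
    by (rule bij_betwI[of _ _ _ "\<lambda>m. t' * m mod p"])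
       (use p0 inv[OF i1] inv[OF i2] in \<open>auto simp: pos_mod_bound[OF p0, THEN zle_diff1_eq[THEN iffD2]]\<close>)
  then show ?thesis by (rule sum.reindex_bij_betw[symmetric])
qed

lemma exists_t:
  fixes p :: int and psi :: "int \<Rightarrow> complex"
  assumes "prime p" "p mod 4 = 3" "dirichlet_char p psi" "psi (-1) = 1"
    and "psi \<noteq> principal_char p"
  shows "\<exists>t. coprime t p \<and> psi t ^ 4 \<noteq> 1"
proof (rule ccontr)
  assume "\<not> ?thesis"
  then have h4: "\<And>t. coprime t p \<Longrightarrow> psi t ^ 4 = 1" by blast
  define k where "k = nat (p div 4)"
  have d: "p = 4 * (p div 4) + 3" using div_mult_mod_eq[of p 4] assms(2) by linarith
  have d0: "p div 4 \<ge> 0" using prime_gt_1_int[OF assms(1)] by simp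
  have pk: "nat p - 1 = 4 * k + 2" unfolding k_def using d d0 by arith
  have one: "psi t = 1" if ct: "coprime t p" for t
  proof -
    have a: "psi t ^ (4 * k + 2) = 1" using dc_root[OF assms(3,1) ct] pk by simp
    have b: "psi t ^ (4 * k + 2) = (psi t ^ 4) ^ k * psi t ^ 2" by (simp only: power_add power_mult power_one_right)
    have sq: "psi t ^ 2 = 1" using a b h4[OF ct] by (metis power_one mult_1)
    have "psi t ^ (2 * k + 1) = (psi t ^ 2) ^ k * psi t" by (simp only: power_add power_mult power_one_right)
    moreover have "psi (t ^ (2 * k + 1)) = psi t ^ (2 * k + 1)" by (rule dc_pow[OF assms(3)])
    ultimately have "psi t = psi (t ^ (2 * k + 1))" using sq by (metis power_one mult_1)
    moreover have "[(t ^ (2 * k + 1)) * (t ^ (2 * k + 1)) = 1] (mod p)"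
    proof -
      have "(t ^ (2 * k + 1)) * (t ^ (2 * k + 1)) = t ^ (nat p - 1)" using pk
        by (simp flip: power_add)
      then show ?thesis using fermat_int[OF assms(1) ct] by simp
    qed
    then have "p dvd (t ^ (2 * k + 1) - 1) * (t ^ (2 * k + 1) + 1)"
      by (simp add: cong_iff_dvd_diff algebra_simps dvd_diff_commute)
    then have "p dvd (t ^ (2 * k + 1) - 1) \<or> p dvd (t ^ (2 * k + 1) + 1)"
      using assms(1) prime_dvd_mult_iff by blast
    then have "[t ^ (2 * k + 1) = 1] (mod p) \<or> [t ^ (2 * k + 1) = -1] (mod p)"
      by (auto simp: cong_iff_dvd_diff)
    then have "psi (t ^ (2 * k + 1)) = 1"
      using dc_cong[OF assms(3)] dc_one[OF assms(3)] assms(4) by metis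
    ultimately show ?thesis by simp
  qed
  have "psi = principal_char p"
  proof
    fix x show "psi x = principal_char p x"
      using one[of x] dc_zero[OF assms(3), of x] unfolding principal_char_def by (cases "coprime x p") simp_all
  qed
  with assms(5) show False by simp
qed

lemma main_psi:
  fixes p :: int and psi :: "int \<Rightarrow> complex"
  assumes "prime p" "p mod 4 = 3" "dirichlet_char p psi" "psi (-1) = 1"
    and "psi \<noteq> principal_char p"
  shows "(\<Sum>a=0..p-1. \<Sum>b=0..p-1. \<Sum>c=0..p-1. \<Sum>d=0..p-1.
            cnj (psi (a^5 + b^5 - c^5 - d^5)) * psi (a + b - c - d)) = 0"
proof -
  obtain t where ct: "coprime t p" and t4: "psi t ^ 4 \<noteq> 1" using exists_t[OF assms] by blast
  define F where "F = (\<lambda>a b c d. cnj (psi (a^5 + b^5 - c^5 - d^5)) * psi (a + b - c - d))"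
  define h where "h = (\<lambda>x. t * x mod p)"
  define A where "A = {0..p-1}"
  define S where "S = (\<Sum>a\<in>A. \<Sum>b\<in>A. \<Sum>c\<in>A. \<Sum>d\<in>A. F a b c d)"
  have R: "(\<Sum>x\<in>A. g x) = (\<Sum>x\<in>A. g (h x))" for g :: "int \<Rightarrow> complex"
    unfolding A_def h_def by (rule reindex_mult[OF assms(1) ct])
  have 1: "\<And>a b c. (\<Sum>d\<in>A. F a b c d) = (\<Sum>d\<in>A. F a b c (h d))" by (rule R)
  have 2: "\<And>a b. (\<Sum>c\<in>A. \<Sum>d\<in>A. F a b c (h d)) = (\<Sum>c\<in>A. \<Sum>d\<in>A. F a b (h c) (h d))"
    by (rule R)
  have 3: "\<And>a. (\<Sum>b\<in>A. \<Sum>c\<in>A. \<Sum>d\<in>A. F a b (h c) (h d)) = (\<Sum>b\<in>A. \<Sum>c\<in>A. \<Sum>d\<in>A. F a (h b) (h c) (h d))"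
    by (rule R)
  have 4: "(\<Sum>a\<in>A. \<Sum>b\<in>A. \<Sum>c\<in>A. \<Sum>d\<in>A. F a (h b) (h c) (h d)) = (\<Sum>a\<in>A. \<Sum>b\<in>A. \<Sum>c\<in>A. \<Sum>d\<in>A. F (h a) (h b) (h c) (h d))"
    by (rule R)
  have Fh: "F (h a) (h b) (h c) (h d) = cnj (psi t ^ 4) * F a b c d" for a b c d
  proof -
    have "[h a ^ 5 + h b ^ 5 - h c ^ 5 - h d ^ 5 = (t*a) ^ 5 + (t*b) ^ 5 - (t*c) ^ 5 - (t*d) ^ 5] (mod p)"
      unfolding h_def by (intro cong_add cong_diff cong_pow) (simp_all add: cong_def)
    also have "(t*a) ^ 5 + (t*b) ^ 5 - (t*c) ^ 5 - (t*d) ^ 5 = t ^ 5 * (a^5 + b^5 - c^5 - d^5)"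
      by (simp add: power_mult_distrib algebra_simps)
    finally have e5: "psi (h a ^ 5 + h b ^ 5 - h c ^ 5 - h d ^ 5) = psi t ^ 5 * psi (a^5 + b^5 - c^5 - d^5)"
      using dc_cong[OF assms(3)] dc_pow[OF assms(3)] assms(3) unfolding dirichlet_char_def by metis
    have "[h a + h b - h c - h d = t*a + t*b - t*c - t*d] (mod p)"
      unfolding h_def by (intro cong_add cong_diff) (simp_all add: cong_def)
    also have "t*a + t*b - t*c - t*d = t * (a + b - c - d)" by (simp add: algebra_simps)
    finally have e1: "psi (h a + h b - h c - h d) = psi t * psi (a + b - c - d)"
      using dc_cong[OF assms(3)] assms(3) unfolding dirichlet_char_def by metis
    have n: "cnj (psi t) * psi t = 1" by (rule dc_norm[OF assms(3,1) ct])
    have "F (h a) (h b) (h c) (h d) = (cnj (psi t) ^ 4 * (cnj (psi t) * psi t)) * F a b c d"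
      unfolding F_def e5 e1 by (simp add: algebra_simps eval_nat_numeral)
    then show ?thesis using n by simp
  qed
  have "S = (\<Sum>a\<in>A. \<Sum>b\<in>A. \<Sum>c\<in>A. \<Sum>d\<in>A. F (h a) (h b) (h c) (h d))"
    unfolding S_def by (simp only: 1 2 3 4)
  also have "\<dots> = cnj (psi t ^ 4) * S"
    unfolding S_def Fh by (simp add: sum_distrib_left)
  finally have "(1 - cnj (psi t ^ 4)) * S = 0" by (simp add: algebra_simps)
  moreover have "cnj (psi t ^ 4) \<noteq> 1" using t4 by (metis complex_cnj_cnj complex_cnj_one)
  ultimately have "S = 0" by simp
  then show ?thesis unfolding S_def F_def A_def .
qed


lemma dc_prod:
  assumes "dirichlet_char n chi1" "dirichlet_char n chi2"
  shows "dirichlet_char n (\<lambda>x. chi1 x * chi2 x)"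
  unfolding dirichlet_char_def
proof (intro conjI allI)
  fix a b
  show "chi1 (a * b) * chi2 (a * b) = chi1 a * chi2 a * (chi1 b * chi2 b)"
    using dc_mult[OF assms(1), of a b] dc_mult[OF assms(2), of a b] by (simp add: mult_ac)
next
  fix a
  show "chi1 (a + n) * chi2 (a + n) = chi1 a * chi2 a"
    using dc_per[OF assms(1), of a] dc_per[OF assms(2), of a] by simp
  show "(chi1 a * chi2 a = 0) = (\<not> coprime a n)"
    using dc_zero[OF assms(1), of a] dc_zero[OF assms(2), of a] by simp
qed

theorem lemma2p4:
  fixes p :: int and chi1 chi2 :: "int \<Rightarrow> complex"
  assumes "prime p" and "odd p" and "p mod 4 = 3"
    and "dirichlet_char p chi1" and "dirichlet_char p chi2"
    and "odd_char chi1" and "odd_char chi2"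
    and "(\<lambda>x. chi1 x * chi2 x) \<noteq> principal_char p"
  shows "(\<Sum>a=0..p-1. \<Sum>b=0..p-1. \<Sum>c=0..p-1. \<Sum>d=0..p-1.
            cnj (chi1 (a^5 + b^5 - c^5 - d^5)) * cnj (chi2 (a^5 + b^5 - c^5 - d^5))
            * (chi1 (a + b - c - d) * chi2 (a + b - c - d))) = 0"
proof -
  have dc: "dirichlet_char p (\<lambda>x. chi1 x * chi2 x)" by (rule dc_prod[OF assms(4,5)])
  have m1: "(\<lambda>x. chi1 x * chi2 x) (-1) = 1"
    using assms(6,7) unfolding odd_char_def by simp
  have eq: "cnj (chi1 x) * cnj (chi2 x) * (chi1 y * chi2 y) = cnj (chi1 x * chi2 x) * (chi1 y * chi2 y)" for x y
    by simp
  show ?thesis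
    unfolding eq by (rule main_psi[OF assms(1) assms(3) dc m1 assms(8)])
qed

end
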